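(* Let $(G,\cdot)$ be a loop with identity $e$ and $(H,\cdot)$ a non-trivial subloop of exponent $2$ (i.e. $ss=e$ for all $s\in H$) such that $(xs\cdot z)s=x(sz\cdot s)$ for all $x,z\in G$, $s\in H$. Then for every $s\in H$, the map $L_sR_s^{-1}$ is a second Smarandache semi-automorphism of $G_H$, i.e. $e(L_sR_s^{-1})=e$ and $(ty\cdot t)L_sR_s^{-1}=(tL_sR_s^{-1}\cdot yL_sR_s^{-1})\,tL_sR_s^{-1}$ for all $y\in G$, $t\in H$.
   Context: Juxtaposition binds more tightly than $\cdot$. Maps are written on the right and composed left to right; $xR_s=x\cdot s$, $xL_s=s\cdot x$. *)

theory Defs
  imports Main
begin

definition loop :: "'a set \<Rightarrow> ('a \<Rightarrow> 'a \<Rightarrow> 'a) \<Rightarrow> 'a \<Rightarrow> bool" where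
  "loop G m e \<longleftrightarrow> e \<in> G \<and> (\<forall>x\<in>G. \<forall>y\<in>G. m x y \<in> G)
     \<and> (\<forall>x\<in>G. m e x = x \<and> m x e = x)
     \<and> (\<forall>a\<in>G. \<forall>b\<in>G. \<exists>!x. x \<in> G \<and> m a x = b)
     \<and> (\<forall>a\<in>G. \<forall>b\<in>G. \<exists>!y. y \<in> G \<and> m y a = b)"

definition subloop :: "'a set \<Rightarrow> 'a set \<Rightarrow> ('a \<Rightarrow> 'a \<Rightarrow> 'a) \<Rightarrow> 'a \<Rightarrow> bool" where
  "subloop H G m e \<longleftrightarrow> H \<subseteq> G \<and> loop H m e"

definition rinv :: "'a set \<Rightarrow> ('a \<Rightarrow> 'a \<Rightarrow> 'a) \<Rightarrow> 'a \<Rightarrow> 'a \<Rightarrow> 'a" where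
  "rinv G m s x = (THE y. y \<in> G \<and> m y s = x)"

text \<open>The map L_s R_s^{-1} (maps act on the right, composed left to right):
  x \<mapsto> (s x) R_s^{-1}.\<close>
definition LRinv :: "'a set \<Rightarrow> ('a \<Rightarrow> 'a \<Rightarrow> 'a) \<Rightarrow> 'a \<Rightarrow> 'a \<Rightarrow> 'a" where
  "LRinv G m s x = rinv G m s (m s x)"

end

theory Submission
  imports Defs
begin

lemma trans_subst_help: "a = f b \<Longrightarrow> b = c \<Longrightarrow> a = f c" by simp

theorem corollary3p3:
  fixes G H :: "'a set" and m :: "'a \<Rightarrow> 'a \<Rightarrow> 'a" and e :: 'a
  assumes "loop G m e"
    and "subloop H G m e"
    and "H \<noteq> {e}"
    and "\<forall>s\<in>H. m s s = e"
    and "\<forall>x\<in>G. \<forall>z\<in>G. \<forall>s\<in>H. m (m (m x s) z) s = m x (m (m s z) s)"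
  shows "\<forall>s\<in>H. LRinv G m s e = e \<and>
           (\<forall>y\<in>G. \<forall>t\<in>H. LRinv G m s (m (m t y) t)
               = m (m (LRinv G m s t) (LRinv G m s y)) (LRinv G m s t))"
proof
  fix s assume sH: "s \<in> H"
  have HG: "H \<subseteq> G" using assms(2) unfolding subloop_def by (elim conjE)
  have L: "e \<in> G \<and> (\<forall>x\<in>G. \<forall>y\<in>G. m x y \<in> G)
     \<and> (\<forall>x\<in>G. m e x = x \<and> m x e = x)
     \<and> (\<forall>a\<in>G. \<forall>b\<in>G. \<exists>!x. x \<in> G \<and> m a x = b)
     \<and> (\<forall>a\<in>G. \<forall>b\<in>G. \<exists>!y. y \<in> G \<and> m y a = b)" using assms(1) unfolding loop_def .
  have LH: "(\<forall>x\<in>H. \<forall>y\<in>H. m x y \<in> H)" using assms(2) unfolding subloop_def loop_def by (elim conjE)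
  have cl: "\<And>x y. x \<in> G \<Longrightarrow> y \<in> G \<Longrightarrow> m x y \<in> G" using L by (elim conjE) (rule bspec bspec, auto)
  have clH: "\<And>x y. x \<in> H \<Longrightarrow> y \<in> H \<Longrightarrow> m x y \<in> H" using LH by auto
  have eid: "\<And>x. x \<in> G \<Longrightarrow> m e x = x \<and> m x e = x" using L by (elim conjE) auto
  have eG: "e \<in> G" using L by (elim conjE)
  have RD: "\<forall>a\<in>G. \<forall>b\<in>G. \<exists>!y. y \<in> G \<and> m y a = b" using L by (elim conjE)
  have B: "\<And>x z u. x \<in> G \<Longrightarrow> z \<in> G \<Longrightarrow> u \<in> H \<Longrightarrow> m (m (m x u) z) u = m x (m (m u z) u)"
    using assms(5) by blast
  have RIP: "\<And>x u. x \<in> G \<Longrightarrow> u \<in> H \<Longrightarrow> m (m x u) u = x"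
  proof -
    fix x u assume x: "x \<in> G" and u: "u \<in> H"
    have "m (m (m x u) e) u = m x (m (m u e) u)" using B[OF x eG u] .
    moreover have "m x u \<in> G" using x u HG cl by blast
    moreover have "m u u = e" using u assms(4) by blast
    moreover have "m u e = u" using eid u HG by blast
    ultimately show "m (m x u) u = x" using eid x by simp
  qed
  have LR: "\<And>x. x \<in> G \<Longrightarrow> LRinv G m s x = m (m s x) s"
  proof -
    fix x assume x: "x \<in> G"
    have sG: "s \<in> G" using sH HG by blast
    have sx: "m s x \<in> G" using cl sG x by blast
    have uniq: "\<exists>!y. y \<in> G \<and> m y s = m s x" using RD[rule_format, OF sG sx] .
    have "m (m s x) s \<in> G \<and> m (m (m s x) s) s = m s x" using cl[OF sx sG] RIP[OF sx sH] by (rule conjI)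
    hence "(THE y. y \<in> G \<and> m y s = m s x) = m (m s x) s" by (rule the1_equality[OF uniq])
    thus "LRinv G m s x = m (m s x) s" by (simp add: LRinv_def rinv_def)
  qed
  show "LRinv G m s e = e \<and>
           (\<forall>y\<in>G. \<forall>t\<in>H. LRinv G m s (m (m t y) t)
               = m (m (LRinv G m s t) (LRinv G m s y)) (LRinv G m s t))"
  proof (intro conjI ballI)
    have sG: "s \<in> G" using sH HG by blast
    show "LRinv G m s e = e" using LR[OF eG] eid[OF sG] assms(4) sH by simp
  next
    fix y t assume y: "y \<in> G" and tH: "t \<in> H"
    have sG: "s \<in> G" using sH HG by blast
    have tG: "t \<in> G" using tH HG by blast
    have ty: "m t y \<in> G" using cl tG y by blast
    have st: "m s t \<in> G" using cl sG tG by blast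
    have sty: "m (m s t) y \<in> G" using cl st y by blast
    have styt: "m (m (m s t) y) t \<in> G" using cl sty tG by blast
    have sy: "m s y \<in> G" using cl sG y by blast
    have uH: "m (m s t) s \<in> H" using clH sH tH by blast
    have uG: "m (m s t) s \<in> G" using uH HG by blast
    have a1: "m s (m (m t y) t) = m (m (m s t) y) t" using B[OF sG y tH] by (rule sym)
    have a: "LRinv G m s (m (m t y) t) = m (m (m (m s t) y) t) s"
      using LR[OF cl[OF ty tG]] a1 by (rule trans_subst_help)
    have uv: "m (m (m s t) s) (m (m s y) s) = m (m (m s t) y) s"
    proof -
      have "m (m (m s t) s) (m (m s y) s) = m (m (m (m (m s t) s) s) y) s" using B[OF uG y sH] by (rule sym)
      also have "m (m (m s t) s) s = m s t" by (rule RIP[OF st sH])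
      finally show ?thesis .
    qed
    have b: "m (m (m (m s t) y) s) (m (m s t) s) = m (m (m (m s t) y) t) s"
    proof -
      have "m (m (m (m s t) y) s) (m (m s t) s) = m (m (m (m (m (m s t) y) s) s) t) s"
        using B[OF cl[OF sty sG] tG sH] by (rule sym)
      also have "m (m (m (m s t) y) s) s = m (m s t) y" by (rule RIP[OF sty sH])
      finally show ?thesis .
    qed
    show "LRinv G m s (m (m t y) t) = m (m (LRinv G m s t) (LRinv G m s y)) (LRinv G m s t)"
      unfolding a LR[OF tG] LR[OF y] uv b ..
  qed
qed

end
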